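(* Let $G$ be an ADMG and let $\{x,y\}$, $Z$, $W$ be pairwise disjoint node sets of $G$ (with $x\neq y$ nodes). Then $(Z,W)$ is a valid conditional instrumental set relative to $(x,y)$ in $G$ if and only if all of the following hold: (i) there is no directed path from $x$ to $y$ that contains a node in $W$; (ii) there exists a walk from some node of $Z$ to $x$ that is open given $W$; (iii) there is no walk from a node of $Z$ to $y$ that is open given $W$ and does not end with a segment of the form $x\to\cdots\to y$ (a walk $v_1,\dots,v_r$ with edges $e_1,\dots,e_{r-1}$ ends with such a segment if there is an index $i$ with $v_i=x$ and every edge $e_j$, $j\ge i$, is of the form $v_j\to v_{j+1}$).
   Context: An ADMG $G$ has a finite node set $V$, directed edges $u\to v$ and bidirected edges $u\leftrightarrow v$, such that the subgraph of directed edges has no directed cycle. A walk is a sequence of nodes $v_1,\dots,v_r$ with edges $e_1,\dots,e_{r-1}$, $e_i$ joining $v_i$ and $v_{i+1}$ (nodes may repeat); a path is a walk with distinct nodes. A walk is directed from $v_1$ to $v_r$ if each $e_i$ is $v_i\to v_{i+1}$. $u$ is a parent of $v$ if $u\to v$; $\mathrm{de}_G(v)$ ($\mathrm{an}_G(v)$) is the set of nodes reachable from $v$ by a directed path (from which $v$ is reachable by a directed path), including $v$ itself; for sets take unions. A non-endpoint occurrence $v_i$ ($1<i<r$) on a walk is a collider if both $e_{i-1}$ and $e_i$ have an arrowhead at $v_i$ (each is of the form $\cdot\to v_i$ or $\cdot\leftrightarrow v_i$); otherwise it is a non-collider. A walk is open given $W$ if every collider on it is in $W$ and every non-collider is not in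 $W$. For disjoint sets $A,B,W$, $A\not\perp_G B\mid W$ (d-connected) if some walk from a node of $A$ to a node of $B$ is open given $W$; otherwise $A\perp_G B\mid W$. Let $\mathrm{causal}_G(x,y)=(\mathrm{de}_G(x)\cap\mathrm{an}_G(y))\setminus\{x\}$ and $\mathrm{forb}_G(x,y)=\mathrm{de}_G(\mathrm{causal}_G(x,y))\cup\{x\}$. Let $\tilde G$ be $G$ with all directed edges $x\to c$, $c\in\mathrm{causal}_G(x,y)$, removed. For pairwise disjoint $\{x,y\},Z,W$, $(Z,W)$ is a valid conditional instrumental set relative to $(x,y)$ in $G$ iff (a) $(Z\cup W)\cap\mathrm{forb}_G(x,y)=\emptyset$, (b) $x\not\perp_G Z\mid W$, and (c) $y\perp_{\tilde G} Z\mid W$. *)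

theory Defs
  imports Main
begin

(* An ADMG on node set V: directed edges D (pairs (u,v) meaning u -> v),
   bidirected edges B (a pair (u,v) or (v,u) in B means u <-> v). *)
definition admg :: "'v set \<Rightarrow> ('v \<times> 'v) set \<Rightarrow> ('v \<times> 'v) set \<Rightarrow> bool" where
  "admg V D B \<longleftrightarrow> finite V \<and> D \<subseteq> V \<times> V \<and> B \<subseteq> V \<times> V
     \<and> (\<forall>v. (v, v) \<notin> B) \<and> acyclic D"

(* kind of the i-th edge of a walk, relative to the walk direction:
   Fwd: v_i -> v_(i+1); Bwd: v_i <- v_(i+1); Bid: v_i <-> v_(i+1) *)
datatype step = Fwd | Bwd | Bid

definition is_walk :: "'v set \<Rightarrow> ('v \<times> 'v) set \<Rightarrow> ('v \<times> 'v) set \<Rightarrow> 'v list \<Rightarrow> step list \<Rightarrow> bool" where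
  "is_walk V D B vs ks \<longleftrightarrow> vs \<noteq> [] \<and> set vs \<subseteq> V \<and> length vs = Suc (length ks) \<and>
     (\<forall>i < length ks. case ks ! i of
         Fwd \<Rightarrow> (vs ! i, vs ! Suc i) \<in> D
       | Bwd \<Rightarrow> (vs ! Suc i, vs ! i) \<in> D
       | Bid \<Rightarrow> (vs ! i, vs ! Suc i) \<in> B \<or> (vs ! Suc i, vs ! i) \<in> B)"

(* arrowhead of the edge at its later / earlier endpoint along the walk *)
definition head_right :: "step \<Rightarrow> bool" where
  "head_right k \<longleftrightarrow> k = Fwd \<or> k = Bid"

definition head_left :: "step \<Rightarrow> bool" where
  "head_left k \<longleftrightarrow> k = Bwd \<or> k = Bid"

(* occurrence vs!i (0 < i < length ks) is a collider *)
definition collider :: "step list \<Rightarrow> nat \<Rightarrow> bool" where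
  "collider ks i \<longleftrightarrow> head_right (ks ! (i - 1)) \<and> head_left (ks ! i)"

definition open_walk :: "'v set \<Rightarrow> 'v list \<Rightarrow> step list \<Rightarrow> bool" where
  "open_walk W vs ks \<longleftrightarrow> (\<forall>i. 0 < i \<and> i < length ks \<longrightarrow>
      (collider ks i \<longrightarrow> vs ! i \<in> W) \<and> (\<not> collider ks i \<longrightarrow> vs ! i \<notin> W))"

definition directed_walk :: "step list \<Rightarrow> bool" where
  "directed_walk ks \<longleftrightarrow> (\<forall>i < length ks. ks ! i = Fwd)"

definition dir_path :: "'v set \<Rightarrow> ('v \<times> 'v) set \<Rightarrow> ('v \<times> 'v) set \<Rightarrow> 'v list \<Rightarrow> step list \<Rightarrow> bool" where
  "dir_path V D B vs ks \<longleftrightarrow> is_walk V D B vs ks \<and> distinct vs \<and> directed_walk ks"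

definition de :: "'v set \<Rightarrow> ('v \<times> 'v) set \<Rightarrow> ('v \<times> 'v) set \<Rightarrow> 'v set \<Rightarrow> 'v set" where
  "de V D B S = {u. \<exists>vs ks. dir_path V D B vs ks \<and> hd vs \<in> S \<and> last vs = u}"

definition an :: "'v set \<Rightarrow> ('v \<times> 'v) set \<Rightarrow> ('v \<times> 'v) set \<Rightarrow> 'v set \<Rightarrow> 'v set" where
  "an V D B S = {u. \<exists>vs ks. dir_path V D B vs ks \<and> hd vs = u \<and> last vs \<in> S}"

definition d_connected :: "'v set \<Rightarrow> ('v \<times> 'v) set \<Rightarrow> ('v \<times> 'v) set \<Rightarrow> 'v set \<Rightarrow> 'v set \<Rightarrow> 'v set \<Rightarrow> bool" where
  "d_connected V D B A C W \<longleftrightarrow>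
     (\<exists>vs ks. is_walk V D B vs ks \<and> hd vs \<in> A \<and> last vs \<in> C \<and> open_walk W vs ks)"

definition causal :: "'v set \<Rightarrow> ('v \<times> 'v) set \<Rightarrow> ('v \<times> 'v) set \<Rightarrow> 'v \<Rightarrow> 'v \<Rightarrow> 'v set" where
  "causal V D B x y = (de V D B {x} \<inter> an V D B {y}) - {x}"

definition forb :: "'v set \<Rightarrow> ('v \<times> 'v) set \<Rightarrow> ('v \<times> 'v) set \<Rightarrow> 'v \<Rightarrow> 'v \<Rightarrow> 'v set" where
  "forb V D B x y = de V D B (causal V D B x y) \<union> {x}"

definition D_tilde :: "'v set \<Rightarrow> ('v \<times> 'v) set \<Rightarrow> ('v \<times> 'v) set \<Rightarrow> 'v \<Rightarrow> 'v \<Rightarrow> ('v \<times> 'v) set" where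
  "D_tilde V D B x y = D - {(x, c) | c. c \<in> causal V D B x y}"

definition valid_cis :: "'v set \<Rightarrow> ('v \<times> 'v) set \<Rightarrow> ('v \<times> 'v) set \<Rightarrow> 'v \<Rightarrow> 'v \<Rightarrow> 'v set \<Rightarrow> 'v set \<Rightarrow> bool" where
  "valid_cis V D B x y Z W \<longleftrightarrow>
     (Z \<union> W) \<inter> forb V D B x y = {} \<and>
     d_connected V D B {x} Z W \<and>
     \<not> d_connected V (D_tilde V D B x y) B {y} Z W"

definition ends_directed_from :: "'v \<Rightarrow> 'v list \<Rightarrow> step list \<Rightarrow> bool" where
  "ends_directed_from x vs ks \<longleftrightarrow>
     (\<exists>i < length vs. vs ! i = x \<and> (\<forall>j. i \<le> j \<and> j < length ks \<longrightarrow> ks ! j = Fwd))"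

end

theory Submission
  imports Defs
begin


definition edge :: "('v \<times> 'v) set \<Rightarrow> ('v \<times> 'v) set \<Rightarrow> step \<Rightarrow> 'v \<Rightarrow> 'v \<Rightarrow> bool" where
  "edge D B k a b = (case k of Fwd \<Rightarrow> (a,b) \<in> D | Bwd \<Rightarrow> (b,a) \<in> D | Bid \<Rightarrow> (a,b) \<in> B \<or> (b,a) \<in> B)"

definition coll :: "step \<Rightarrow> step \<Rightarrow> bool" where
  "coll k k' \<longleftrightarrow> head_right k \<and> head_left k'"

fun flip :: "step \<Rightarrow> step" where
  "flip Fwd = Bwd" | "flip Bwd = Fwd" | "flip Bid = Bid"

lemma coll_simps[simp]: "coll k Fwd = False" "coll Bwd k = False" "coll Fwd Bwd = True"
  by (auto simp: coll_def head_right_def head_left_def)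

lemma coll_flip: "coll (flip a) (flip b) = coll b a"
  by (cases a; cases b; simp add: coll_def head_right_def head_left_def)

lemma edge_flip: "edge D B (flip k) u v = edge D B k v u"
  by (cases k; auto simp: edge_def)

lemma is_walk_Nil: "is_walk V D B vs [] \<longleftrightarrow> (\<exists>v. vs = [v] \<and> v \<in> V)"
  by (cases vs) (auto simp: is_walk_def)

lemma is_walk_NilV[simp]: "\<not> is_walk V D B [] ks"
  by (simp add: is_walk_def)

lemma is_walk_len: "is_walk V D B vs ks \<Longrightarrow> length vs = Suc (length ks)"
  by (simp add: is_walk_def)

lemma is_walk_Cons: "is_walk V D B (v # vs) (k # ks) \<longleftrightarrow> v \<in> V \<and> edge D B k v (hd vs) \<and> is_walk V D B vs ks"
proof
  assume a: "is_walk V D B (v # vs) (k # ks)"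
  then have vs: "vs \<noteq> []" by (auto simp: is_walk_def)
  have e0: "edge D B k v (hd vs)" using a vs
    by (auto simp: is_walk_def edge_def hd_conv_nth split: step.splits dest!: spec[of _ 0])
  have "is_walk V D B vs ks" unfolding is_walk_def
  proof (intro conjI allI impI)
    fix i assume "i < length ks"
    then show "case ks ! i of Fwd \<Rightarrow> (vs ! i, vs ! Suc i) \<in> D | Bwd \<Rightarrow> (vs ! Suc i, vs ! i) \<in> D
         | Bid \<Rightarrow> (vs ! i, vs ! Suc i) \<in> B \<or> (vs ! Suc i, vs ! i) \<in> B"
    proof -
      have "Suc i < length (k # ks)" using \<open>i < length ks\<close> by simp
      then have "case (k # ks) ! Suc i of Fwd \<Rightarrow> ((v # vs) ! Suc i, (v # vs) ! Suc (Suc i)) \<in> D | Bwd \<Rightarrow> ((v # vs) ! Suc (Suc i), (v # vs) ! Suc i) \<in> D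
         | Bid \<Rightarrow> ((v # vs) ! Suc i, (v # vs) ! Suc (Suc i)) \<in> B \<or> ((v # vs) ! Suc (Suc i), (v # vs) ! Suc i) \<in> B"
        using a unfolding is_walk_def by blast
      then show ?thesis by (simp split: step.splits)
    qed
  qed (use a vs in \<open>auto simp: is_walk_def\<close>)
  then show "v \<in> V \<and> edge D B k v (hd vs) \<and> is_walk V D B vs ks" using a e0 by (auto simp: is_walk_def)
next
  assume a: "v \<in> V \<and> edge D B k v (hd vs) \<and> is_walk V D B vs ks"
  then have vs: "vs \<noteq> []" by (auto simp: is_walk_def)
  show "is_walk V D B (v # vs) (k # ks)" unfolding is_walk_def
  proof (intro conjI allI impI)
    fix i assume i: "i < length (k # ks)"
    show "case (k # ks) ! i of Fwd \<Rightarrow> ((v # vs) ! i, (v # vs) ! Suc i) \<in> D | Bwd \<Rightarrow> ((v # vs) ! Suc i, (v # vs) ! i) \<in> D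
         | Bid \<Rightarrow> ((v # vs) ! i, (v # vs) ! Suc i) \<in> B \<or> ((v # vs) ! Suc i, (v # vs) ! i) \<in> B"
    proof (cases i)
      case 0 then show ?thesis using a vs by (auto simp: edge_def hd_conv_nth split: step.splits)
    next
      case (Suc j) then show ?thesis using a i by (auto simp: is_walk_def split: step.splits)
    qed
  qed (use a vs in \<open>auto simp: is_walk_def\<close>)
qed

lemma open_Nil[simp]: "open_walk W vs []" by (simp add: open_walk_def)
lemma open_single[simp]: "open_walk W vs [k]" by (simp add: open_walk_def)

lemma open_Cons: "open_walk W (v # vs) (k # ks) \<longleftrightarrow>
   open_walk W vs ks \<and> (ks \<noteq> [] \<longrightarrow> (coll k (hd ks) \<longleftrightarrow> vs ! 0 \<in> W))"
proof -
  have c1: "collider (k # ks) (Suc i) = (if i = 0 then coll k (hd ks) else collider ks i)" if "i < length ks" for i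
    using that by (auto simp: collider_def coll_def hd_conv_nth nth_Cons split: nat.splits)
  show ?thesis
  proof
    assume a: "open_walk W (v # vs) (k # ks)"
    have "open_walk W vs ks" unfolding open_walk_def
    proof (intro allI impI)
      fix i assume i: "0 < i \<and> i < length ks"
      then show "(collider ks i \<longrightarrow> vs ! i \<in> W) \<and> (\<not> collider ks i \<longrightarrow> vs ! i \<notin> W)"
        using a c1[of i] unfolding open_walk_def by (auto dest!: spec[of _ "Suc i"])
    qed
    moreover have "ks \<noteq> [] \<longrightarrow> (coll k (hd ks) \<longleftrightarrow> vs ! 0 \<in> W)"
      using a c1[of 0] unfolding open_walk_def by (auto dest!: spec[of _ "Suc 0"])
    ultimately show "open_walk W vs ks \<and> (ks \<noteq> [] \<longrightarrow> (coll k (hd ks) \<longleftrightarrow> vs ! 0 \<in> W))" by blast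
  next
    assume a: "open_walk W vs ks \<and> (ks \<noteq> [] \<longrightarrow> (coll k (hd ks) \<longleftrightarrow> vs ! 0 \<in> W))"
    show "open_walk W (v # vs) (k # ks)" unfolding open_walk_def
    proof (intro allI impI)
      fix i assume i: "0 < i \<and> i < length (k # ks)"
      then obtain j where j: "i = Suc j" "j < length ks" by (cases i) auto
      show "(collider (k # ks) i \<longrightarrow> (v # vs) ! i \<in> W) \<and> (\<not> collider (k # ks) i \<longrightarrow> (v # vs) ! i \<notin> W)"
        using a c1[of j] j unfolding open_walk_def by auto
    qed
  qed
qed

lemma walk_app: "is_walk V D B vs1 ks1 \<Longrightarrow> is_walk V D B vs2 ks2 \<Longrightarrow> last vs1 = hd vs2 \<Longrightarrow>
   is_walk V D B (vs1 @ tl vs2) (ks1 @ ks2)"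
proof (induction ks1 arbitrary: vs1)
  case Nil
  then obtain v where "vs1 = [v]" by (auto simp: is_walk_Nil)
  moreover have "vs2 \<noteq> []" using Nil by (auto simp: is_walk_def)
  ultimately show ?case using Nil by simp
next
  case (Cons k ks1)
  then obtain v vs1' where v: "vs1 = v # vs1'" by (cases vs1) auto
  have ne: "vs1' \<noteq> []" using Cons v by (auto simp: is_walk_def)
  show ?case using Cons v ne by (auto simp: is_walk_Cons)
qed

lemma open_app: "is_walk V D B vs1 ks1 \<Longrightarrow> is_walk V D B vs2 ks2 \<Longrightarrow> last vs1 = hd vs2 \<Longrightarrow>
   open_walk W vs1 ks1 \<Longrightarrow> open_walk W vs2 ks2 \<Longrightarrow>
   (ks1 \<noteq> [] \<longrightarrow> ks2 \<noteq> [] \<longrightarrow> (coll (last ks1) (hd ks2) \<longleftrightarrow> hd vs2 \<in> W)) \<Longrightarrow>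
   open_walk W (vs1 @ tl vs2) (ks1 @ ks2)"
proof (induction ks1 arbitrary: vs1)
  case Nil
  then obtain v where "vs1 = [v]" by (auto simp: is_walk_Nil)
  moreover have "vs2 \<noteq> []" using Nil by (auto simp: is_walk_def)
  ultimately show ?case using Nil by simp
next
  case (Cons k ks1)
  then obtain v vs1' where v: "vs1 = v # vs1'" by (cases vs1) auto
  have ne: "vs1' \<noteq> []" using Cons v by (auto simp: is_walk_def)
  have w1: "is_walk V D B vs1' ks1" using Cons(2) v by (simp add: is_walk_Cons)
  have o1: "open_walk W vs1' ks1" "ks1 \<noteq> [] \<longrightarrow> (coll k (hd ks1) \<longleftrightarrow> vs1' ! 0 \<in> W)"
    using Cons(5) v by (auto simp: open_Cons)
  have c7: "ks1 \<noteq> [] \<longrightarrow> ks2 \<noteq> [] \<longrightarrow> (coll (last ks1) (hd ks2) \<longleftrightarrow> hd vs2 \<in> W)"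
    using Cons(7) by auto
  have IH: "open_walk W (vs1' @ tl vs2) (ks1 @ ks2)"
    using Cons.IH[OF w1 Cons(3) _ o1(1) Cons(6) c7] Cons(4) v ne by auto
  show ?case
  proof (cases ks1)
    case Nil
    then obtain u where "vs1' = [u]" using w1 by (auto simp: is_walk_Nil)
    then show ?thesis using IH Cons(4,7) v Nil
      by (auto simp: open_Cons hd_conv_nth[symmetric])
  next
    case (Cons a l)
    then show ?thesis using IH o1 v ne by (auto simp: open_Cons nth_append)
  qed
qed

lemma hd_app: "vs1 \<noteq> [] \<Longrightarrow> hd (vs1 @ tl vs2) = hd vs1" by simp
lemma last_app: "vs1 \<noteq> [] \<Longrightarrow> vs2 \<noteq> [] \<Longrightarrow> last vs1 = hd vs2 \<Longrightarrow> last (vs1 @ tl vs2) = last vs2"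
  by (cases vs2) auto
lemma set_app: "set (vs1 @ tl vs2) \<subseteq> set vs1 \<union> set vs2"
  by (cases vs2) auto

lemma walk_rev: "is_walk V D B vs ks \<Longrightarrow> is_walk V D B (rev vs) (rev (map flip ks)) \<and>
   (open_walk W vs ks \<longrightarrow> open_walk W (rev vs) (rev (map flip ks)))"
proof (induction ks arbitrary: vs)
  case Nil then show ?case by (auto simp: is_walk_Nil)
next
  case (Cons k ks)
  then obtain v vs' where v: "vs = v # vs'" by (cases vs) auto
  have ne: "vs' \<noteq> []" using Cons v by (auto simp: is_walk_def)
  have a: "v \<in> V" "edge D B k v (hd vs')" "is_walk V D B vs' ks" using Cons(2) v by (auto simp: is_walk_Cons)
  have hv: "hd vs' \<in> V" using a(3) ne by (cases vs') (auto simp: is_walk_def)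
  have w2: "is_walk V D B [hd vs', v] [flip k]" using a hv
    by (simp add: is_walk_Cons is_walk_Nil edge_flip)
  note IH = Cons.IH[OF a(3)]
  have eq: "rev vs = rev vs' @ tl [hd vs', v]" "rev (map flip (k # ks)) = rev (map flip ks) @ [flip k]"
    using v by auto
  have lr: "last (rev vs') = hd [hd vs', v]" using ne by (simp add: last_rev)
  have W: "is_walk V D B (rev vs) (rev (map flip (k # ks)))"
    unfolding eq by (rule walk_app[OF IH[THEN conjunct1] w2 lr])
  moreover have "open_walk W vs (k # ks) \<longrightarrow> open_walk W (rev vs) (rev (map flip (k # ks)))"
  proof
    assume o: "open_walk W vs (k # ks)"
    have o1: "open_walk W vs' ks" "ks \<noteq> [] \<longrightarrow> (coll k (hd ks) \<longleftrightarrow> vs' ! 0 \<in> W)"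
      using o v by (auto simp: open_Cons)
    show "open_walk W (rev vs) (rev (map flip (k # ks)))"
      unfolding eq
    proof (rule open_app[OF IH[THEN conjunct1] w2 lr])
      show "open_walk W (rev vs') (rev (map flip ks))" using IH o1 by blast
      show "open_walk W [hd vs', v] [flip k]" by simp
      show "rev (map flip ks) \<noteq> [] \<longrightarrow> [flip k] \<noteq> [] \<longrightarrow>
        (coll (last (rev (map flip ks))) (hd [flip k]) \<longleftrightarrow> hd [hd vs', v] \<in> W)"
      proof (intro impI)
        assume "rev (map flip ks) \<noteq> []"
        then have "ks \<noteq> []" by simp
        then show "coll (last (rev (map flip ks))) (hd [flip k]) \<longleftrightarrow> hd [hd vs', v] \<in> W"
          using o1 ne by (simp add: last_rev hd_map coll_flip hd_conv_nth)
      qed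
    qed

  qed
  ultimately show ?case by blast
qed



lemma walk_mono: "is_walk V D B vs ks \<Longrightarrow> D \<subseteq> D' \<Longrightarrow> is_walk V D' B vs ks"
proof -
  assume a: "is_walk V D B vs ks" "D \<subseteq> D'"
  show ?thesis unfolding is_walk_def
  proof (intro conjI allI impI)
    fix i assume i: "i < length ks"
    then have "case ks ! i of Fwd \<Rightarrow> (vs ! i, vs ! Suc i) \<in> D | Bwd \<Rightarrow> (vs ! Suc i, vs ! i) \<in> D
       | Bid \<Rightarrow> (vs ! i, vs ! Suc i) \<in> B \<or> (vs ! Suc i, vs ! i) \<in> B" using a(1) unfolding is_walk_def by blast
    then show "case ks ! i of Fwd \<Rightarrow> (vs ! i, vs ! Suc i) \<in> D' | Bwd \<Rightarrow> (vs ! Suc i, vs ! i) \<in> D'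
       | Bid \<Rightarrow> (vs ! i, vs ! Suc i) \<in> B \<or> (vs ! Suc i, vs ! i) \<in> B" using a(2) by (auto split: step.splits)
  qed (use a in \<open>auto simp: is_walk_def\<close>)
qed

lemma dir_set_aux: "directed_walk ks \<longleftrightarrow> (\<forall>k\<in>set ks. k = Fwd)"
  by (simp add: directed_walk_def all_set_conv_all_nth)
lemmas dir_set = dir_set_aux

lemma dir_app: "directed_walk (ks1 @ ks2) \<longleftrightarrow> directed_walk ks1 \<and> directed_walk ks2"
  unfolding dir_set_aux by auto


lemma dir_open: "directed_walk ks \<Longrightarrow> (\<And>i. 0 < i \<Longrightarrow> i < length ks \<Longrightarrow> vs ! i \<notin> W) \<Longrightarrow> open_walk W vs ks"
  by (auto simp: open_walk_def directed_walk_def collider_def head_left_def)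

lemma dir_reach: "is_walk V D B vs ks \<Longrightarrow> directed_walk ks \<Longrightarrow> i \<le> j \<Longrightarrow> j \<le> length ks \<Longrightarrow> (vs ! i, vs ! j) \<in> D\<^sup>*"
proof (induction j)
  case 0 then show ?case by simp
next
  case (Suc j)
  show ?case
  proof (cases "i = Suc j")
    case True then show ?thesis by simp
  next
    case False
    then have r: "(vs ! i, vs ! j) \<in> D\<^sup>*" using Suc by auto
    have jl: "j < length ks" using Suc.prems by auto
    then have "ks ! j = Fwd" using Suc.prems(2) by (simp add: directed_walk_def)
    then have "(vs ! j, vs ! Suc j) \<in> D" using Suc.prems(1) jl unfolding is_walk_def
      by (auto dest!: spec[of _ j])
    then show ?thesis using r by simp
  qed
qed

lemma dir_reach_tr: "is_walk V D B vs ks \<Longrightarrow> directed_walk ks \<Longrightarrow> i < j \<Longrightarrow> j \<le> length ks \<Longrightarrow> (vs ! i, vs ! j) \<in> D\<^sup>+"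
proof -
  assume a: "is_walk V D B vs ks" "directed_walk ks" "i < j" "j \<le> length ks"
  have il: "i < length ks" using a by auto
  then have "ks ! i = Fwd" using a(2) by (simp add: directed_walk_def)
  then have "(vs ! i, vs ! Suc i) \<in> D" using a(1) il unfolding is_walk_def
    by (auto dest!: spec[of _ i])
  moreover have "(vs ! Suc i, vs ! j) \<in> D\<^sup>*" using dir_reach[OF a(1,2)] a by auto
  ultimately show ?thesis by auto
qed

lemma dir_set_reach: "is_walk V D B vs ks \<Longrightarrow> directed_walk ks \<Longrightarrow> u \<in> set vs \<Longrightarrow>
  (hd vs, u) \<in> D\<^sup>* \<and> (u, last vs) \<in> D\<^sup>*"
proof -
  assume a: "is_walk V D B vs ks" "directed_walk ks" "u \<in> set vs"
  have l: "length vs = Suc (length ks)" "vs \<noteq> []" using a by (auto simp: is_walk_def)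
  obtain i where i: "i < length vs" "vs ! i = u" using a(3) by (auto simp: in_set_conv_nth)
  have "hd vs = vs ! 0" "last vs = vs ! length ks" using l by (auto simp: hd_conv_nth last_conv_nth)
  then show ?thesis using dir_reach[OF a(1,2)] i l by auto
qed

lemma dir_distinct: "is_walk V D B vs ks \<Longrightarrow> directed_walk ks \<Longrightarrow> acyclic D \<Longrightarrow> distinct vs"
proof -
  assume a: "is_walk V D B vs ks" "directed_walk ks" "acyclic D"
  have l: "length vs = Suc (length ks)" using a by (auto simp: is_walk_def)
  show ?thesis unfolding distinct_conv_nth
  proof (intro allI impI)
    fix i j assume ij: "i < length vs" "j < length vs" "i \<noteq> j"
    show "vs ! i \<noteq> vs ! j"
    proof (cases "i < j")
      case True
      then show ?thesis using dir_reach_tr[OF a(1,2) True] ij l a(3) by (auto simp: acyclic_def)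
    next
      case False
      then have "j < i" using ij by auto
      then show ?thesis using dir_reach_tr[OF a(1,2) \<open>j < i\<close>] ij l a(3) by (auto simp: acyclic_def)
    qed
  qed
qed

lemma rt_walk: assumes "D \<subseteq> V \<times> V" "(a, b) \<in> D\<^sup>*" "b \<in> V" shows
  "\<exists>vs ks. is_walk V D B vs ks \<and> directed_walk ks \<and> hd vs = a \<and> last vs = b"
  using assms(2)
proof (induction rule: converse_rtrancl_induct)
  case base
  then show ?case using assms(3) by (intro exI[of _ "[b]"] exI[of _ "[]"]) (auto simp: is_walk_Nil directed_walk_def)
next
  case (step a a')
  then obtain vs ks where w: "is_walk V D B vs ks" "directed_walk ks" "hd vs = a'" "last vs = b" by blast
  have "vs \<noteq> []" using w by (auto simp: is_walk_def)
  then show ?case using w step(1) assms(1)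
    by (intro exI[of _ "a # vs"] exI[of _ "Fwd # ks"])
       (auto simp: is_walk_Cons edge_def dir_set)
qed

lemma de_char: "D \<subseteq> V \<times> V \<Longrightarrow> acyclic D \<Longrightarrow> de V D B S = {u. \<exists>s\<in>S \<inter> V. (s, u) \<in> D\<^sup>*}"
proof (intro set_eqI iffI)
  fix u assume D: "D \<subseteq> V \<times> V" "acyclic D"
  {
    assume "u \<in> de V D B S"
    then obtain vs ks where w: "dir_path V D B vs ks" "hd vs \<in> S" "last vs = u" by (auto simp: de_def)
    have "hd vs \<in> V" using w by (cases vs) (auto simp: dir_path_def is_walk_def)
    moreover have "(hd vs, last vs) \<in> D\<^sup>*" using w dir_set_reach[of V D B vs ks "last vs"]
      by (auto simp: dir_path_def is_walk_def)
    ultimately show "u \<in> {u. \<exists>s\<in>S \<inter> V. (s, u) \<in> D\<^sup>*}" using w by auto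
  }
  {
    assume "u \<in> {u. \<exists>s\<in>S \<inter> V. (s, u) \<in> D\<^sup>*}"
    then obtain s where s: "s \<in> S" "s \<in> V" "(s, u) \<in> D\<^sup>*" by auto
    have "u \<in> V" using s(3) s(2) D(1) by (induction rule: rtrancl_induct) auto
    then obtain vs ks where "is_walk V D B vs ks" "directed_walk ks" "hd vs = s" "last vs = u"
      using rt_walk[OF D(1) s(3)] by blast
    moreover then have "distinct vs" using dir_distinct[OF _ _ D(2)] by blast
    ultimately show "u \<in> de V D B S" using s unfolding de_def dir_path_def by blast
  }
qed

lemma an_char: "D \<subseteq> V \<times> V \<Longrightarrow> acyclic D \<Longrightarrow> S \<subseteq> V \<Longrightarrow> an V D B S = {u. u \<in> V \<and> (\<exists>s\<in>S. (u, s) \<in> D\<^sup>*)}"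
proof (intro set_eqI iffI)
  fix u assume D: "D \<subseteq> V \<times> V" "acyclic D" "S \<subseteq> V"
  {
    assume "u \<in> an V D B S"
    then obtain vs ks where w: "dir_path V D B vs ks" "last vs \<in> S" "hd vs = u" by (auto simp: an_def)
    have "hd vs \<in> V" using w by (cases vs) (auto simp: dir_path_def is_walk_def)
    moreover have "(hd vs, last vs) \<in> D\<^sup>*" using w dir_set_reach[of V D B vs ks "last vs"]
      by (auto simp: dir_path_def is_walk_def)
    ultimately show "u \<in> {u. u \<in> V \<and> (\<exists>s\<in>S. (u, s) \<in> D\<^sup>*)}" using w by auto
  }
  {
    assume "u \<in> {u. u \<in> V \<and> (\<exists>s\<in>S. (u, s) \<in> D\<^sup>*)}"
    then obtain s where s: "s \<in> S" "u \<in> V" "(u, s) \<in> D\<^sup>*" by auto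
    then obtain vs ks where "is_walk V D B vs ks" "directed_walk ks" "hd vs = u" "last vs = s"
      using rt_walk[OF D(1) s(3)] D(3) by blast
    moreover then have "distinct vs" using dir_distinct[OF _ _ D(2)] by blast
    ultimately show "u \<in> an V D B S" using s unfolding an_def dir_path_def by blast
  }
qed

lemma ends_app: "ends_directed_from x (vs1 @ tl vs2) (ks1 @ ks2) \<Longrightarrow> length vs1 = Suc (length ks1) \<Longrightarrow>
   Bwd \<in> set ks2 \<Longrightarrow> x \<notin> set vs2 \<Longrightarrow> False"
proof -
  assume a: "ends_directed_from x (vs1 @ tl vs2) (ks1 @ ks2)" "length vs1 = Suc (length ks1)"
    "Bwd \<in> set ks2" "x \<notin> set vs2"
  obtain i where i: "i < length (vs1 @ tl vs2)" "(vs1 @ tl vs2) ! i = x"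
    "\<forall>j. i \<le> j \<and> j < length (ks1 @ ks2) \<longrightarrow> (ks1 @ ks2) ! j = Fwd"
    using a(1) unfolding ends_directed_from_def by blast
  obtain p where p: "p < length ks2" "ks2 ! p = Bwd" using a(3) by (auto simp: in_set_conv_nth)
  have "(ks1 @ ks2) ! (length ks1 + p) = Bwd" using p by (simp add: nth_append)
  then have "\<not> i \<le> length ks1 + p" using i(3) p by fastforce
  then have "i \<ge> length vs1" using a(2) by auto
  then have "(vs1 @ tl vs2) ! i = tl vs2 ! (i - length vs1)" by (simp add: nth_append)
  moreover have "i - length vs1 < length (tl vs2)" using i(1) \<open>i \<ge> length vs1\<close> by simp
  ultimately have "x \<in> set (tl vs2)" using i(2) by (metis nth_mem)
  then show False using a(4) by (cases vs2) auto
qed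



lemma rtV: "(a, b) \<in> D\<^sup>* \<Longrightarrow> a \<in> V \<Longrightarrow> D \<subseteq> V \<times> V \<Longrightarrow> b \<in> V"
  by (induction rule: rtrancl_induct) auto

lemma dir_hd_last: "directed_walk k \<Longrightarrow> k \<noteq> [] \<Longrightarrow> hd k = Fwd \<and> last k = Fwd"
  by (simp add: dir_set)

lemma len_hd_last: "length v = Suc n \<Longrightarrow> last v = v ! n \<and> hd v = v ! 0"
  by (cases v) (auto simp: last_conv_nth)

lemma walk_ne: "is_walk V D B v k \<Longrightarrow> v \<noteq> []"
  by (simp add: is_walk_def)

theorem mainTheorem2:
  fixes V :: "'v set" and D B :: "('v \<times> 'v) set" and x y :: 'v and Z W :: "'v set"
  assumes "admg V D B"
    and "x \<in> V" and "y \<in> V" and "x \<noteq> y"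
    and "Z \<subseteq> V" and "W \<subseteq> V"
    and "x \<notin> Z" and "y \<notin> Z" and "x \<notin> W" and "y \<notin> W" and "Z \<inter> W = {}"
  shows "valid_cis V D B x y Z W \<longleftrightarrow>
     (\<not> (\<exists>vs ks. dir_path V D B vs ks \<and> hd vs = x \<and> last vs = y \<and> set vs \<inter> W \<noteq> {})) \<and>
     (\<exists>vs ks. is_walk V D B vs ks \<and> hd vs \<in> Z \<and> last vs = x \<and> open_walk W vs ks) \<and>
     (\<not> (\<exists>vs ks. is_walk V D B vs ks \<and> hd vs \<in> Z \<and> last vs = y \<and> open_walk W vs ks
              \<and> \<not> ends_directed_from x vs ks))"
proof -
  note xV = assms(2) and yV = assms(3)
  have fV: "finite V" and DV: "D \<subseteq> V \<times> V" and acy: "acyclic D"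
    using assms(1) by (auto simp: admg_def)
  have nocyc: "\<And>a. (a, a) \<notin> D\<^sup>+" using acy by (simp add: acyclic_def)
  have deC: "\<And>S. de V D B S = {u. \<exists>s\<in>S \<inter> V. (s, u) \<in> D\<^sup>*}" by (rule de_char[OF DV acy])
  have causalC: "\<And>c. c \<in> causal V D B x y \<longleftrightarrow> c \<noteq> x \<and> (x, c) \<in> D\<^sup>* \<and> (c, y) \<in> D\<^sup>*"
  proof -
    fix c
    have "an V D B {y} = {u. u \<in> V \<and> (u, y) \<in> D\<^sup>*}" using an_char[OF DV acy, of "{y}" B] yV by auto
    moreover have "de V D B {x} = {u. (x, u) \<in> D\<^sup>*}" using deC[of "{x}"] xV by auto
    ultimately show "c \<in> causal V D B x y \<longleftrightarrow> c \<noteq> x \<and> (x, c) \<in> D\<^sup>* \<and> (c, y) \<in> D\<^sup>*"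
      unfolding causal_def using rtV[OF _ xV DV] by auto
  qed
  have causalV: "\<And>c. c \<in> causal V D B x y \<Longrightarrow> c \<in> V" using causalC rtV[OF _ xV DV] by blast
  have forbC: "\<And>u. u \<in> forb V D B x y \<longleftrightarrow> u = x \<or> (\<exists>c. c \<in> causal V D B x y \<and> (c, u) \<in> D\<^sup>*)"
    unfolding forb_def deC using causalV by auto
  have xnot: "\<And>c u. c \<in> causal V D B x y \<Longrightarrow> (c, u) \<in> D\<^sup>* \<Longrightarrow> u \<noteq> x"
  proof
    fix c u assume c: "c \<in> causal V D B x y" "(c, u) \<in> D\<^sup>*" "u = x"
    have "c \<noteq> x" "(x, c) \<in> D\<^sup>*" using c(1) causalC by auto
    then have "(x, c) \<in> D\<^sup>+" by (metis rtranclD)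
    then show False using c nocyc by (meson rtrancl_into_trancl1 rtrancl_trancl_trancl)
  qed
  show ?thesis
  proof
    assume V: "valid_cis V D B x y Z W"
    then have a: "(Z \<union> W) \<inter> forb V D B x y = {}" and b: "d_connected V D B {x} Z W"
      and c: "\<not> d_connected V (D_tilde V D B x y) B {y} Z W" by (auto simp: valid_cis_def)
    define C where "C = {u. \<exists>c\<in>causal V D B x y. (c, u) \<in> D\<^sup>*}"
    have CW: "\<And>u. u \<in> C \<Longrightarrow> u \<notin> W \<and> u \<notin> Z" using a forbC unfolding C_def by blast
    have Ccl: "\<And>u v. u \<in> C \<Longrightarrow> (u, v) \<in> D \<Longrightarrow> v \<in> C"
      unfolding C_def by (auto intro: rtrancl_into_rtrancl)
    have causC: "\<And>c. c \<in> causal V D B x y \<Longrightarrow> c \<in> C" unfolding C_def by blast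
    have i: "\<not> (\<exists>vs ks. dir_path V D B vs ks \<and> hd vs = x \<and> last vs = y \<and> set vs \<inter> W \<noteq> {})"
    proof
      assume "\<exists>vs ks. dir_path V D B vs ks \<and> hd vs = x \<and> last vs = y \<and> set vs \<inter> W \<noteq> {}"
      then obtain vs ks w where p: "dir_path V D B vs ks" "hd vs = x" "last vs = y" "w \<in> set vs" "w \<in> W"
        by blast
      have "(x, w) \<in> D\<^sup>* \<and> (w, y) \<in> D\<^sup>*" using dir_set_reach[of V D B vs ks w] p
        by (auto simp: dir_path_def)
      then have "w \<in> causal V D B x y" using causalC p assms(9) by auto
      then show False using causC CW p by blast
    qed
    have ii: "\<exists>vs ks. is_walk V D B vs ks \<and> hd vs \<in> Z \<and> last vs = x \<and> open_walk W vs ks"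
    proof -
      obtain vs ks where w: "is_walk V D B vs ks" "hd vs = x" "last vs \<in> Z" "open_walk W vs ks"
        using b by (auto simp: d_connected_def)
      have ne: "vs \<noteq> []" using w walk_ne by blast
      show ?thesis using walk_rev[OF w(1), of W] w ne
        by (intro exI[of _ "rev vs"] exI[of _ "rev (map flip ks)"]) (auto simp: hd_rev last_rev)
    qed
    have iii: "\<not> (\<exists>vs ks. is_walk V D B vs ks \<and> hd vs \<in> Z \<and> last vs = y \<and> open_walk W vs ks
              \<and> \<not> ends_directed_from x vs ks)"
    proof
      assume "\<exists>vs ks. is_walk V D B vs ks \<and> hd vs \<in> Z \<and> last vs = y \<and> open_walk W vs ks
              \<and> \<not> ends_directed_from x vs ks"
      then obtain vs ks where w: "is_walk V D B vs ks" and hz: "hd vs \<in> Z" and ly: "last vs = y"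
        and o: "open_walk W vs ks" and ne: "\<not> ends_directed_from x vs ks" by blast
      have len: "length vs = Suc (length ks)" using w by (simp add: is_walk_def)
      have edges: "\<And>j. j < length ks \<Longrightarrow> case ks ! j of Fwd \<Rightarrow> (vs ! j, vs ! Suc j) \<in> D | Bwd \<Rightarrow> (vs ! Suc j, vs ! j) \<in> D
         | Bid \<Rightarrow> (vs ! j, vs ! Suc j) \<in> B \<or> (vs ! Suc j, vs ! j) \<in> B"
        using w unfolding is_walk_def by blast
      have colW: "\<And>m. 0 < m \<Longrightarrow> m < length ks \<Longrightarrow> collider ks m \<Longrightarrow> vs ! m \<in> W"
        using o unfolding open_walk_def by blast
      have noF: "\<And>j. j < length ks \<Longrightarrow> ks ! j = Fwd \<Longrightarrow> vs ! j = x \<Longrightarrow> vs ! Suc j \<notin> causal V D B x y"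
      proof
        fix j assume j: "j < length ks" "ks ! j = Fwd" "vs ! j = x" "vs ! Suc j \<in> causal V D B x y"
        have inv: "j < m \<longrightarrow> m \<le> length ks \<longrightarrow> vs ! m \<in> C \<and> ks ! (m - 1) = Fwd" for m
        proof (induction m)
          case 0 then show ?case by simp
        next
          case (Suc m)
          show ?case
          proof (intro impI)
            assume jm: "j < Suc m" "Suc m \<le> length ks"
            show "vs ! Suc m \<in> C \<and> ks ! (Suc m - 1) = Fwd"
            proof (cases "j < m")
              case True
              then have h: "vs ! m \<in> C" "ks ! (m - 1) = Fwd" using Suc jm by auto
              have "ks ! m = Fwd"
              proof (rule ccontr)
                assume "ks ! m \<noteq> Fwd"
                then have "collider ks m" using h(2)
                  by (cases "ks ! m") (auto simp: collider_def head_right_def head_left_def)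
                then have "vs ! m \<in> W" using colW[of m] True jm by auto
                then show False using CW h by blast
              qed
              then have "(vs ! m, vs ! Suc m) \<in> D" using edges[of m] jm by auto
              then show ?thesis using Ccl h \<open>ks ! m = Fwd\<close> by auto
            next
              case False
              then have "m = j" using jm by auto
              then show ?thesis using j causC by auto
            qed
          qed
        qed
        have "ends_directed_from x vs ks" unfolding ends_directed_from_def
        proof (intro exI[of _ j] conjI allI impI)
          show "j < length vs" using j len by auto
          show "vs ! j = x" using j by auto
          fix l assume "j \<le> l \<and> l < length ks"
          then show "ks ! l = Fwd" using inv[of "Suc l"] by auto
        qed
        then show False using ne by blast
      qed
      have noB: "\<And>j. j < length ks \<Longrightarrow> ks ! j = Bwd \<Longrightarrow> vs ! Suc j = x \<Longrightarrow> vs ! j \<notin> causal V D B x y"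
      proof
        fix j assume j: "j < length ks" "ks ! j = Bwd" "vs ! Suc j = x" "vs ! j \<in> causal V D B x y"
        have inv: "d \<le> j \<longrightarrow> vs ! (j - d) \<in> C \<and> ks ! (j - d) = Bwd" for d
        proof (induction d)
          case 0 then show ?case using j causC by auto
        next
          case (Suc d)
          show ?case
          proof
            assume dj: "Suc d \<le> j"
            define m where "m = j - d"
            have m: "0 < m" "m < length ks" "j - Suc d = m - 1" using dj j unfolding m_def by auto
            have h: "vs ! m \<in> C" "ks ! m = Bwd" using Suc dj unfolding m_def by auto
            have "ks ! (m - 1) = Bwd"
            proof (rule ccontr)
              assume "ks ! (m - 1) \<noteq> Bwd"
              then have "collider ks m" using h(2)
                by (cases "ks ! (m - 1)") (auto simp: collider_def head_right_def head_left_def)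
              then have "vs ! m \<in> W" using colW[of m] m by auto
              then show False using CW h by blast
            qed
            moreover have "Suc (m - 1) = m" using m by auto
            ultimately have "(vs ! m, vs ! (m - 1)) \<in> D" using edges[of "m - 1"] m by auto
            then show "vs ! (j - Suc d) \<in> C \<and> ks ! (j - Suc d) = Bwd"
              using Ccl h m \<open>ks ! (m - 1) = Bwd\<close> by auto
          qed
        qed
        have "vs ! 0 \<in> C" using inv[of j] by auto
        moreover have "hd vs = vs ! 0" using len by (cases vs) auto
        ultimately show False using CW hz by auto
      qed
      have wt: "is_walk V (D_tilde V D B x y) B vs ks" unfolding is_walk_def
      proof (intro conjI allI impI)
        fix j assume j: "j < length ks"
        show "case ks ! j of Fwd \<Rightarrow> (vs ! j, vs ! Suc j) \<in> D_tilde V D B x y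
          | Bwd \<Rightarrow> (vs ! Suc j, vs ! j) \<in> D_tilde V D B x y
          | Bid \<Rightarrow> (vs ! j, vs ! Suc j) \<in> B \<or> (vs ! Suc j, vs ! j) \<in> B"
          using edges[OF j] noF[OF j] noB[OF j] by (cases "ks ! j") (auto simp: D_tilde_def)
      qed (use w in \<open>auto simp: is_walk_def\<close>)
      have nev: "vs \<noteq> []" using w walk_ne by blast
      have "d_connected V (D_tilde V D B x y) B {y} Z W"
        unfolding d_connected_def using walk_rev[OF wt, of W] o hz ly nev
        by (intro exI[of _ "rev vs"] exI[of _ "rev (map flip ks)"]) (auto simp: hd_rev last_rev)
      then show False using c by blast
    qed
    show "(\<not> (\<exists>vs ks. dir_path V D B vs ks \<and> hd vs = x \<and> last vs = y \<and> set vs \<inter> W \<noteq> {})) \<and>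
     (\<exists>vs ks. is_walk V D B vs ks \<and> hd vs \<in> Z \<and> last vs = x \<and> open_walk W vs ks) \<and>
     (\<not> (\<exists>vs ks. is_walk V D B vs ks \<and> hd vs \<in> Z \<and> last vs = y \<and> open_walk W vs ks
              \<and> \<not> ends_directed_from x vs ks))" using i ii iii by blast
  next
    assume R: "(\<not> (\<exists>vs ks. dir_path V D B vs ks \<and> hd vs = x \<and> last vs = y \<and> set vs \<inter> W \<noteq> {})) \<and>
     (\<exists>vs ks. is_walk V D B vs ks \<and> hd vs \<in> Z \<and> last vs = x \<and> open_walk W vs ks) \<and>
     (\<not> (\<exists>vs ks. is_walk V D B vs ks \<and> hd vs \<in> Z \<and> last vs = y \<and> open_walk W vs ks
              \<and> \<not> ends_directed_from x vs ks))"
    then have i: "\<not> (\<exists>vs ks. dir_path V D B vs ks \<and> hd vs = x \<and> last vs = y \<and> set vs \<inter> W \<noteq> {})"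
      and ii: "\<exists>vs ks. is_walk V D B vs ks \<and> hd vs \<in> Z \<and> last vs = x \<and> open_walk W vs ks"
      and iii: "\<And>vs ks. is_walk V D B vs ks \<Longrightarrow> hd vs \<in> Z \<Longrightarrow> last vs = y \<Longrightarrow> open_walk W vs ks
              \<Longrightarrow> ends_directed_from x vs ks" by blast+
    obtain vA kA where A: "is_walk V D B vA kA" "hd vA \<in> Z" "last vA = x" "open_walk W vA kA"
      using ii by blast
    have b: "d_connected V D B {x} Z W"
    proof -
      have ne: "vA \<noteq> []" using A walk_ne by blast
      show ?thesis unfolding d_connected_def using walk_rev[OF A(1), of W] A ne
        by (intro exI[of _ "rev vA"] exI[of _ "rev (map flip kA)"]) (auto simp: hd_rev last_rev)
    qed
    have c: "\<not> d_connected V (D_tilde V D B x y) B {y} Z W"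
    proof
      assume "d_connected V (D_tilde V D B x y) B {y} Z W"
      then obtain vs ks where w: "is_walk V (D_tilde V D B x y) B vs ks" "hd vs = y" "last vs \<in> Z"
        "open_walk W vs ks" by (auto simp: d_connected_def)
      define rv where "rv = rev vs"
      define rk where "rk = rev (map flip ks)"
      have ne: "vs \<noteq> []" using w walk_ne by blast
      have wr: "is_walk V (D_tilde V D B x y) B rv rk" "open_walk W rv rk"
        using walk_rev[OF w(1), of W] w(4) unfolding rv_def rk_def by auto
      have Dt: "D_tilde V D B x y \<subseteq> D" by (auto simp: D_tilde_def)
      have hl: "hd rv \<in> Z" "last rv = y" using w ne unfolding rv_def by (auto simp: hd_rev last_rev)
      have "ends_directed_from x rv rk" using iii[OF walk_mono[OF wr(1) Dt] hl wr(2)] .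
      then obtain i where i: "i < length rv" "rv ! i = x" "\<And>j. i \<le> j \<Longrightarrow> j < length rk \<Longrightarrow> rk ! j = Fwd"
        unfolding ends_directed_from_def by blast
      have len: "length rv = Suc (length rk)" using wr(1) by (simp add: is_walk_def)
      have lastrv: "last rv = rv ! length rk" using len_hd_last[OF len] by simp
      have ilt: "i < length rk"
      proof (rule ccontr)
        assume "\<not> i < length rk"
        then have "i = length rk" using i len by auto
        then show False using i hl lastrv assms(4) by auto
      qed
      have edges: "\<And>j. j < length rk \<Longrightarrow> case rk ! j of Fwd \<Rightarrow> (rv ! j, rv ! Suc j) \<in> D_tilde V D B x y
         | Bwd \<Rightarrow> (rv ! Suc j, rv ! j) \<in> D_tilde V D B x y
         | Bid \<Rightarrow> (rv ! j, rv ! Suc j) \<in> B \<or> (rv ! Suc j, rv ! j) \<in> B"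
        using wr(1) unfolding is_walk_def by blast
      have e0: "(x, rv ! Suc i) \<in> D_tilde V D B x y" using edges[OF ilt] i(2) i(3)[of i] ilt by auto
      have reach: "Suc i \<le> m \<longrightarrow> m \<le> length rk \<longrightarrow> (rv ! Suc i, rv ! m) \<in> D\<^sup>*" for m
      proof (induction m)
        case 0 then show ?case by simp
      next
        case (Suc m)
        show ?case
        proof (intro impI)
          assume m: "Suc i \<le> Suc m" "Suc m \<le> length rk"
          show "(rv ! Suc i, rv ! Suc m) \<in> D\<^sup>*"
          proof (cases "Suc i = Suc m")
            case True then show ?thesis by simp
          next
            case False
            then have r: "(rv ! Suc i, rv ! m) \<in> D\<^sup>*" using Suc m by auto
            have "rk ! m = Fwd" using i(3)[of m] m False by auto
            then have "(rv ! m, rv ! Suc m) \<in> D" using edges[of m] m Dt by auto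
            then show ?thesis using r by simp
          qed
        qed
      qed
      have "(rv ! Suc i, y) \<in> D\<^sup>*" using reach[of "length rk"] ilt lastrv hl by auto
      moreover have "(x, rv ! Suc i) \<in> D" using e0 Dt by auto
      moreover have "rv ! Suc i \<noteq> x" using \<open>(x, rv ! Suc i) \<in> D\<close> nocyc by auto
      ultimately have "rv ! Suc i \<in> causal V D B x y" using causalC by auto
      then show False using e0 by (auto simp: D_tilde_def)
    qed
    have noW: "\<And>w. (x, w) \<in> D\<^sup>* \<Longrightarrow> (w, y) \<in> D\<^sup>* \<Longrightarrow> w \<notin> W"
    proof
      fix w assume w: "(x, w) \<in> D\<^sup>*" "(w, y) \<in> D\<^sup>*" "w \<in> W"
      have wV: "w \<in> V" using rtV[OF w(1) xV DV] .
      obtain v1 k1 where p1: "is_walk V D B v1 k1" "directed_walk k1" "hd v1 = x" "last v1 = w"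
        using rt_walk[OF DV w(1) wV] by blast
      obtain v2 k2 where p2: "is_walk V D B v2 k2" "directed_walk k2" "hd v2 = w" "last v2 = y"
        using rt_walk[OF DV w(2) yV] by blast
      have ne: "v1 \<noteq> []" "v2 \<noteq> []" using p1 p2 walk_ne by blast+
      have pw: "is_walk V D B (v1 @ tl v2) (k1 @ k2)" using walk_app[OF p1(1) p2(1)] p1 p2 by auto
      have pd: "directed_walk (k1 @ k2)" using p1 p2 by (simp add: dir_app)
      have "dir_path V D B (v1 @ tl v2) (k1 @ k2)" using pw pd dir_distinct[OF pw pd acy]
        by (simp add: dir_path_def)
      moreover have "hd (v1 @ tl v2) = x" "last (v1 @ tl v2) = y" using ne p1 p2 by (auto simp: last_app)
      moreover have "w \<in> set (v1 @ tl v2)" using ne p1 by auto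
      ultimately show False using i w(3) by blast
    qed
    have P4ex: "\<And>c. c \<in> causal V D B x y \<Longrightarrow> \<exists>v k. is_walk V D B v k \<and> directed_walk k \<and> hd v = c \<and> last v = y
        \<and> open_walk W v k \<and> (\<forall>u\<in>set v. (c, u) \<in> D\<^sup>*)"
    proof -
      fix c assume c: "c \<in> causal V D B x y"
      then have cc: "(x, c) \<in> D\<^sup>*" "(c, y) \<in> D\<^sup>*" using causalC by auto
      obtain v k where p: "is_walk V D B v k" "directed_walk k" "hd v = c" "last v = y"
        using rt_walk[OF DV cc(2) yV] by blast
      have r: "\<forall>u\<in>set v. (c, u) \<in> D\<^sup>* \<and> (u, y) \<in> D\<^sup>*" using dir_set_reach[OF p(1,2)] p by auto
      have "open_walk W v k"
      proof (rule dir_open[OF p(2)])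
        fix i assume "0 < i" "i < length k"
        then have "v ! i \<in> set v" using p(1) by (simp add: is_walk_def)
        then show "v ! i \<notin> W" using r cc noW by (meson rtrancl_trans)
      qed
      then show "\<exists>v k. is_walk V D B v k \<and> directed_walk k \<and> hd v = c \<and> last v = y
        \<and> open_walk W v k \<and> (\<forall>u\<in>set v. (c, u) \<in> D\<^sup>*)" using p r by blast
    qed
    have wfD: "wf (D\<^sup>+)"
    proof -
      have "finite D" using fV DV by (meson finite_SigmaI finite_subset)
      then show ?thesis using acy by (simp add: finite_acyclic_wf wf_trancl)
    qed
    have Wc: "\<And>c w. c \<in> causal V D B x y \<Longrightarrow> (c, w) \<in> D\<^sup>* \<Longrightarrow> w \<notin> W"
    proof
      fix c w0 assume c: "c \<in> causal V D B x y" and w0: "(c, w0) \<in> D\<^sup>*" "w0 \<in> W"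
      define Q where "Q = {w. (c, w) \<in> D\<^sup>* \<and> w \<in> W}"
      obtain w where wQ: "w \<in> Q" and wmin: "\<And>w'. (w', w) \<in> D\<^sup>+ \<Longrightarrow> w' \<notin> Q"
        using wfE_min[OF wfD, of w0 Q] w0 unfolding Q_def by blast
      have cc: "c \<noteq> x" "(x, c) \<in> D\<^sup>*" "(c, y) \<in> D\<^sup>*" using c causalC by auto
      have cW: "c \<notin> W" using noW cc by blast
      have cw: "(c, w) \<in> D\<^sup>*" "w \<in> W" using wQ unfolding Q_def by auto
      have wc: "w \<noteq> c" using cw cW by auto
      have cV: "c \<in> V" using causalV c .
      have wV: "w \<in> V" using rtV[OF cw(1) cV DV] .
      obtain v2 k2 where p2: "is_walk V D B v2 k2" "directed_walk k2" "hd v2 = c" "last v2 = w"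
        using rt_walk[OF DV cw(1) wV] by blast
      have len2: "length v2 = Suc (length k2)" using p2 by (simp add: is_walk_def)
      have hd2: "hd v2 = v2 ! 0" and last2: "last v2 = v2 ! length k2" using len_hd_last[OF len2]
        by auto
      have k2ne: "k2 \<noteq> []"
      proof
        assume "k2 = []" then show False using p2 hd2 last2 wc by auto
      qed
      have k2F: "hd k2 = Fwd" "last k2 = Fwd" using dir_hd_last[OF p2(2) k2ne] by auto
      have o2: "open_walk W v2 k2"
      proof (rule dir_open[OF p2(2)])
        fix i assume i: "0 < i" "i < length k2"
        have "(c, v2 ! i) \<in> D\<^sup>*" using dir_reach[OF p2(1,2), of 0 i] i hd2 p2(3) by auto
        moreover have "(v2 ! i, w) \<in> D\<^sup>+" using dir_reach_tr[OF p2(1,2), of i "length k2"] i last2 p2(4) by auto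
        ultimately show "v2 ! i \<notin> W" using wmin unfolding Q_def by blast
      qed
      note r3 = walk_rev[OF p2(1), of W]
      define v3 where "v3 = rev v2"
      define k3 where "k3 = rev (map flip k2)"
      have p3: "is_walk V D B v3 k3" "open_walk W v3 k3" using r3 o2 unfolding v3_def k3_def by auto
      have ne2: "v2 \<noteq> []" using p2 walk_ne by blast
      have hl3: "hd v3 = w" "last v3 = c" using ne2 p2 unfolding v3_def by (auto simp: hd_rev last_rev)
      have k3: "hd k3 = Bwd" "last k3 = Bwd" "Bwd \<in> set k3" "k3 \<noteq> []"
        using k2F k2ne hd_in_set[OF k2ne] unfolding k3_def by (auto simp: hd_rev last_rev last_map hd_map intro!: image_eqI[of Bwd flip Fwd])
      define vS1 where "vS1 = v2 @ tl v3"
      define kS1 where "kS1 = k2 @ k3"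
      have pS1: "is_walk V D B vS1 kS1" unfolding vS1_def kS1_def
        using walk_app[OF p2(1) p3(1)] p2 hl3 by auto
      have oS1: "open_walk W vS1 kS1" unfolding vS1_def kS1_def
        using open_app[OF p2(1) p3(1) _ o2 p3(2)] p2 hl3 k2F k3 cw by auto
      have hlS1: "hd vS1 = c" "last vS1 = c" "last kS1 = Bwd" "hd kS1 = Fwd"
        using ne2 p2 hl3 k3 k2F k2ne p3 walk_ne[OF p3(1)] unfolding vS1_def kS1_def by (auto simp: last_app)
      obtain v4 k4 where p4: "is_walk V D B v4 k4" "directed_walk k4" "hd v4 = c" "last v4 = y"
        "open_walk W v4 k4" "\<forall>u\<in>set v4. (c, u) \<in> D\<^sup>*" using P4ex[OF c] by blast
      define vS where "vS = vS1 @ tl v4"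
      define kS where "kS = kS1 @ k4"
      have pS: "is_walk V D B vS kS" unfolding vS_def kS_def
        using walk_app[OF pS1 p4(1)] p4 hlS1 by auto
      have oS: "open_walk W vS kS" unfolding vS_def kS_def
        using open_app[OF pS1 p4(1) _ oS1 p4(5)] p4 hlS1 cW by auto
      have ne4: "v4 \<noteq> []" using p4 walk_ne by blast
      have neS1: "vS1 \<noteq> []" using pS1 walk_ne by blast
      have hlS: "hd vS = c" "last vS = y" "hd kS = Fwd" "Bwd \<in> set kS"
        using hlS1 ne4 neS1 p4 k3 k2ne k2F unfolding vS_def kS_def kS1_def by (auto simp: last_app)
      have setS: "\<forall>u\<in>set vS. (c, u) \<in> D\<^sup>*"
      proof -
        have "set vS \<subseteq> set v2 \<union> set v3 \<union> set v4"
          using set_app[of vS1 v4] set_app[of v2 v3] unfolding vS_def vS1_def by auto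
        moreover have "set v3 = set v2" unfolding v3_def by simp
        moreover have "\<forall>u\<in>set v2. (c, u) \<in> D\<^sup>*" using dir_set_reach[OF p2(1,2)] p2(3) by auto
        ultimately show ?thesis using p4(6) by blast
      qed
      have xS: "x \<notin> set vS" using setS xnot[OF c] by blast
      obtain v1 k1 where p1: "is_walk V D B v1 k1" "directed_walk k1" "hd v1 = x" "last v1 = c"
        using rt_walk[OF DV cc(2) cV] by blast
      have len1: "length v1 = Suc (length k1)" using p1 by (simp add: is_walk_def)
      have k1ne: "k1 \<noteq> []"
      proof
        assume "k1 = []" then show False using p1 len1 cc(1) by (cases v1) auto
      qed
      have o1: "open_walk W v1 k1"
      proof (rule dir_open[OF p1(2)])
        fix i assume "0 < i" "i < length k1"
        then have "v1 ! i \<in> set v1" using len1 by simp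
        then have "(x, v1 ! i) \<in> D\<^sup>*" "(v1 ! i, c) \<in> D\<^sup>*" using dir_set_reach[OF p1(1,2)] p1 by auto
        then show "v1 ! i \<notin> W" using noW cc by (meson rtrancl_trans)
      qed
      have k1F: "hd k1 = Fwd" "last k1 = Fwd" using dir_hd_last[OF p1(2) k1ne] by auto
      define vR1 where "vR1 = vA @ tl v1"
      define kR1 where "kR1 = kA @ k1"
      have pR1: "is_walk V D B vR1 kR1" unfolding vR1_def kR1_def
        using walk_app[OF A(1) p1(1)] A p1 by auto
      have oR1: "open_walk W vR1 kR1" unfolding vR1_def kR1_def
        using open_app[OF A(1) p1(1) _ A(4) o1] A p1 k1F assms(9) by auto
      have neA: "vA \<noteq> []" and ne1: "v1 \<noteq> []" using A p1 walk_ne by blast+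
      have hlR1: "hd vR1 \<in> Z" "last vR1 = c" "length vR1 = Suc (length kR1)"
        using neA ne1 A p1 pR1 unfolding vR1_def by (auto simp: last_app is_walk_def)
      define vR where "vR = vR1 @ tl vS"
      define kR where "kR = kR1 @ kS"
      have pR: "is_walk V D B vR kR" unfolding vR_def kR_def
        using walk_app[OF pR1 pS] hlR1 hlS by auto
      have oR: "open_walk W vR kR" unfolding vR_def kR_def
        using open_app[OF pR1 pS _ oR1 oS] hlR1 hlS cW by auto
      have neR1: "vR1 \<noteq> []" and neS: "vS \<noteq> []" using pR1 pS walk_ne by blast+
      have hlR: "hd vR \<in> Z" "last vR = y" using hlR1 hlS neR1 neS unfolding vR_def by (auto simp: last_app)
      have "ends_directed_from x vR kR" using iii[OF pR hlR oR] .
      then show False using ends_app[of x vR1 vS kR1 kS] hlR1 hlS xS unfolding vR_def kR_def by blast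
    qed
    have Zc: "\<And>z. z \<in> Z \<Longrightarrow> z \<notin> forb V D B x y"
    proof
      fix z assume z: "z \<in> Z" "z \<in> forb V D B x y"
      have "z \<noteq> x" using z assms(7) by auto
      then obtain c where c: "c \<in> causal V D B x y" "(c, z) \<in> D\<^sup>*" using forbC[of z] z(2) by blast
      have zV: "z \<in> V" using z assms(5) by auto
      obtain v k where p: "is_walk V D B v k" "directed_walk k" "hd v = c" "last v = z"
        using rt_walk[OF DV c(2) zV] by blast
      have len: "length v = Suc (length k)" using p by (simp add: is_walk_def)
      have sv: "\<forall>u\<in>set v. (c, u) \<in> D\<^sup>*" using dir_set_reach[OF p(1,2)] p by auto
      have o: "open_walk W v k"
      proof (rule dir_open[OF p(2)])
        fix i assume "0 < i" "i < length k"
        then have "v ! i \<in> set v" using len by simp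
        then show "v ! i \<notin> W" using sv Wc[OF c(1)] by blast
      qed
      define v3 where "v3 = rev v"
      define k3 where "k3 = rev (map flip k)"
      have p3: "is_walk V D B v3 k3" "open_walk W v3 k3" using walk_rev[OF p(1), of W] o
        unfolding v3_def k3_def by auto
      have ne: "v \<noteq> []" using p walk_ne by blast
      have hl3: "hd v3 = z" "last v3 = c" using ne p unfolding v3_def by (auto simp: hd_rev last_rev)
      have k3: "k3 \<noteq> [] \<Longrightarrow> last k3 = Bwd" using dir_hd_last[OF p(2)] unfolding k3_def
        by (auto simp: last_rev hd_map)
      obtain v4 k4 where p4: "is_walk V D B v4 k4" "directed_walk k4" "hd v4 = c" "last v4 = y"
        "open_walk W v4 k4" "\<forall>u\<in>set v4. (c, u) \<in> D\<^sup>*" using P4ex[OF c(1)] by blast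
      have cW: "c \<notin> W" using Wc[OF c(1)] by blast
      define vT where "vT = v3 @ tl v4"
      define kT where "kT = k3 @ k4"
      have pT: "is_walk V D B vT kT" unfolding vT_def kT_def
        using walk_app[OF p3(1) p4(1)] hl3 p4 by auto
      have oT: "open_walk W vT kT" unfolding vT_def kT_def
        using open_app[OF p3(1) p4(1) _ p3(2) p4(5)] hl3 p4 k3 cW by auto
      have ne3: "v3 \<noteq> []" and ne4: "v4 \<noteq> []" using p3 p4 walk_ne by blast+
      have hlT: "hd vT \<in> Z" "last vT = y" using hl3 p4 ne3 ne4 z unfolding vT_def by (auto simp: last_app)
      have "set vT \<subseteq> set v3 \<union> set v4" unfolding vT_def by (rule set_app)
      moreover have "set v3 = set v" unfolding v3_def by simp
      ultimately have "x \<notin> set vT" using sv p4(6) xnot[OF c(1)] by blast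
      moreover have "ends_directed_from x vT kT" using iii[OF pT hlT oT] .
      ultimately show False unfolding ends_directed_from_def by (metis nth_mem)
    qed
    have Wf: "\<And>w. w \<in> W \<Longrightarrow> w \<notin> forb V D B x y"
    proof
      fix w assume w: "w \<in> W" "w \<in> forb V D B x y"
      then have "w \<noteq> x" using assms(9) by auto
      then obtain c where "c \<in> causal V D B x y" "(c, w) \<in> D\<^sup>*" using forbC[of w] w(2) by blast
      then show False using Wc w(1) by blast
    qed
    have a: "(Z \<union> W) \<inter> forb V D B x y = {}" using Zc Wf by blast
    show "valid_cis V D B x y Z W" unfolding valid_cis_def using a b c by blast
  qed
qed

end
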